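(* Let $F$ be a finite field with $q=|F|$. Let $m,n\in\mathbb{N}$ with $m\le n+1$, and let $x\in F^{m+n+1}$. Then $$(q-1)\cdot[\operatorname{rank}(H_{m,n}(x))\le m] = \sum_{\substack{v\in F^{1\times(m+1)}\\ v\ne0}}[v\,H_{m,n}(x)=0] \;-\; q\sum_{\substack{v\in F^{1\times m}\\ v\ne 0}}[v\,H_{m-1,n+1}(x)=0].$$
   Context: $\mathbb{N}=\{0,1,2,\ldots\}$. For a statement $\mathcal{A}$, $[\mathcal{A}]$ is $1$ if $\mathcal{A}$ is true and $0$ otherwise. For $x=(x_0,\ldots,x_N)\in F^{N+1}$ and integers $p,p'\ge -1$ with $p+p'\le N$, $H_{p,p'}(x)=(x_{i+j})_{0\le i\le p,\,0\le j\le p'}$ (a $(p+1)\times(p'+1)$ matrix). Row vectors $v$ multiply matrices from the left. *)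

theory Defs
  imports "Jordan_Normal_Form.DL_Rank"
begin

text \<open>The paper's H_{p,p'}(x) is hankel_mat (p+1) (p'+1) x,
  which also covers p = -1 or p' = -1 (zero rows / zero columns).\<close>
definition hankel_mat :: "nat \<Rightarrow> nat \<Rightarrow> 'a vec \<Rightarrow> 'a mat" where
  "hankel_mat r c x = mat r c (\<lambda>(i,j). x $ (i + j))"

end

theory Submission
  imports Defs
begin



definition R :: "'a::field vec \<Rightarrow> 'a vec \<Rightarrow> nat \<Rightarrow> nat \<Rightarrow> 'a" where
  "R x v r j = (\<Sum>i<r. v $ i * x $ (i + j))"

lemma hk_entry:
  fixes x v :: "'a::field vec"
  assumes "v \<in> carrier_vec r" "j < c"
  shows "(mat_of_row v * hankel_mat r c x) $$ (0, j) = R x v r j"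
proof -
  have "(mat_of_row v * hankel_mat r c x) $$ (0, j) = row (mat_of_row v) 0 \<bullet> col (hankel_mat r c x) j"
    using assms by (simp add: hankel_mat_def)
  also have "\<dots> = v \<bullet> col (hankel_mat r c x) j" using assms by simp
  also have "\<dots> = R x v r j" using assms
    unfolding scalar_prod_def R_def hankel_mat_def by (simp add: atLeast0LessThan)
  finally show ?thesis .
qed

lemma hankel_zero_iff:
  fixes x v :: "'a::field vec"
  assumes "v \<in> carrier_vec r"
  shows "(mat_of_row v * hankel_mat r c x = 0\<^sub>m 1 c) \<longleftrightarrow> (\<forall>j<c. R x v r j = 0)"
proof
  assume h: "mat_of_row v * hankel_mat r c x = 0\<^sub>m 1 c"
  show "\<forall>j<c. R x v r j = 0"
  proof (intro allI impI)
    fix j assume j: "j < c"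
    have "R x v r j = (mat_of_row v * hankel_mat r c x) $$ (0, j)" using hk_entry[OF assms j] by simp
    also have "\<dots> = 0" unfolding h using j by simp
    finally show "R x v r j = 0" .
  qed
next
  assume h: "\<forall>j<c. R x v r j = 0"
  have d: "mat_of_row v * hankel_mat r c x \<in> carrier_mat 1 c" unfolding carrier_mat_def by (simp add: hankel_mat_def)
  show "mat_of_row v * hankel_mat r c x = 0\<^sub>m 1 c"
  proof (rule eq_matI)
    fix i j assume "i < dim_row (0\<^sub>m 1 c :: 'a mat)" "j < dim_col (0\<^sub>m 1 c :: 'a mat)"
    then have "i = 0" "j < c" by auto
    then show "(mat_of_row v * hankel_mat r c x) $$ (i, j) = 0\<^sub>m 1 c $$ (i, j)"
      using hk_entry[OF assms, of j c x] h by simp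
  qed (use d in auto)
qed



lemma fin_cv: "finite (carrier_vec n :: 'a::finite vec set)"
proof -
  have "carrier_vec n \<subseteq> vec_of_list ` {xs. set xs \<subseteq> (UNIV::'a set) \<and> length xs = n}"
  proof
    fix v :: "'a vec" assume "v \<in> carrier_vec n"
    then show "v \<in> vec_of_list ` {xs. set xs \<subseteq> UNIV \<and> length xs = n}"
      by (intro image_eqI[where x="list_of_vec v"]) (auto simp: vec_list)
  qed
  moreover have "finite {xs. set xs \<subseteq> (UNIV::'a set) \<and> length xs = n}"
    by (rule finite_lists_length_eq) simp
  ultimately show ?thesis by (meson finite_imageI finite_subset)
qed

lemma R_add: "v \<in> carrier_vec r \<Longrightarrow> w \<in> carrier_vec r \<Longrightarrow> R x (v + w) r j = R x v r j + R x w r j"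
  unfolding R_def by (simp add: sum.distrib distrib_right)

lemma R_smult: "v \<in> carrier_vec r \<Longrightarrow> R x (c \<cdot>\<^sub>v v) r j = c * R x v r j"
  unfolding R_def by (simp add: sum_distrib_left mult.assoc)

definition ex :: "nat \<Rightarrow> 'a::field vec \<Rightarrow> 'a vec" where
  "ex m w = vec (Suc m) (\<lambda>i. if i < m then w $ i else 0)"
definition tk :: "nat \<Rightarrow> 'a::field vec \<Rightarrow> 'a vec" where
  "tk m u = vec m (\<lambda>i. u $ i)"
definition sh :: "nat \<Rightarrow> 'a::field vec \<Rightarrow> 'a vec" where
  "sh m w = vec (Suc m) (\<lambda>i. if i = 0 then 0 else w $ (i - 1))"

lemma R_ex: "R x (ex m w) (Suc m) j = R x w m j"
  unfolding R_def ex_def by (simp add: sum.lessThan_Suc)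

lemma R_tk: "R x u (Suc m) j = R x (tk m u) m j + u $ m * x $ (m + j)"
  unfolding R_def tk_def by (simp add: sum.lessThan_Suc)

lemma R_sh: "R x (sh m w) (Suc m) j = R x w m (Suc j)"
  unfolding R_def sh_def by (simp add: sum.lessThan_Suc_shift del: sum.lessThan_Suc)

lemma ex_carrier[simp]: "ex m w \<in> carrier_vec (Suc m)" by (simp add: ex_def)
lemma tk_carrier[simp]: "tk m w \<in> carrier_vec m" by (simp add: tk_def)
lemma sh_carrier[simp]: "sh m w \<in> carrier_vec (Suc m)" by (simp add: sh_def)
lemma tk_ex[simp]: "w \<in> carrier_vec m \<Longrightarrow> tk m (ex m w) = w"
  by (auto simp: tk_def ex_def)
lemma ex_tk: "u \<in> carrier_vec (Suc m) \<Longrightarrow> u $ m = 0 \<Longrightarrow> ex m (tk m u) = u"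
  by (auto simp: tk_def ex_def less_Suc_eq)




definition K1 :: "'a::field vec \<Rightarrow> nat \<Rightarrow> nat \<Rightarrow> 'a vec set" where
  "K1 x m n = {v \<in> carrier_vec (Suc m). \<forall>j<Suc n. R x v (Suc m) j = 0}"
definition K2 :: "'a::field vec \<Rightarrow> nat \<Rightarrow> nat \<Rightarrow> 'a vec set" where
  "K2 x m n = {w \<in> carrier_vec m. \<forall>j<Suc (Suc n). R x w m j = 0}"
definition K1' :: "'a::field vec \<Rightarrow> nat \<Rightarrow> nat \<Rightarrow> 'a vec set" where
  "K1' x m n = {w \<in> carrier_vec m. \<forall>j<Suc n. R x w m j = 0}"

lemma keyA:
  assumes mn: "m \<le> Suc n" and u: "u \<in> K1 x m n" and u1: "u $ m = 1" and w: "w \<in> K1' x m n"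
  shows "R x w m (Suc n) = 0"
proof -
  define k0 where "k0 = Suc n - m"
  have uz: "R x u (Suc m) j = 0" if "j < Suc n" for j using u that by (simp add: K1_def)
  have wz: "R x w m j = 0" if "j < Suc n" for j using w that by (simp add: K1'_def)
  have "0 = (\<Sum>l<m. w $ l * R x u (Suc m) (k0 + l))"
    by (rule sym, rule sum.neutral) (use uz mn in \<open>auto simp: k0_def\<close>)
  also have "\<dots> = (\<Sum>l<m. \<Sum>i<Suc m. w $ l * (u $ i * x $ (i + (k0 + l))))"
    unfolding R_def by (simp add: sum_distrib_left del: sum.lessThan_Suc)
  also have "\<dots> = (\<Sum>i<Suc m. \<Sum>l<m. w $ l * (u $ i * x $ (i + (k0 + l))))"
    by (rule sum.swap)
  also have "\<dots> = (\<Sum>i<Suc m. u $ i * R x w m (i + k0))"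
    unfolding R_def sum_distrib_left
    by (intro sum.cong refl) (simp add: ac_simps)
  also have "\<dots> = u $ m * R x w m (m + k0)"
    using wz mn by (simp add: sum.lessThan_Suc k0_def)
  also have "\<dots> = R x w m (Suc n)" using u1 mn by (simp add: k0_def)
  finally show ?thesis by simp
qed

lemma sh_tk_K1:
  assumes B: "\<forall>u\<in>K1 x m n. u $ m = 0" and G: "\<forall>w\<in>K1' x m n. R x w m (Suc n) = 0"
    and u: "u \<in> K1 x m n"
  shows "sh m (tk m u) \<in> K1 x m n"
proof -
  have um: "u $ m = 0" using B u by auto
  have t: "R x (tk m u) m j = R x u (Suc m) j" for j using R_tk[of x u m j] um by simp
  have tk1: "tk m u \<in> K1' x m n" using u t by (simp add: K1_def K1'_def)
  show ?thesis unfolding K1_def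
  proof (intro CollectI conjI allI impI)
    fix j assume j: "j < Suc n"
    show "R x (sh m (tk m u)) (Suc m) j = 0"
    proof (cases "Suc j < Suc n")
      case True then show ?thesis using tk1 by (simp add: R_sh K1'_def)
    next
      case False then have "j = n" using j by simp
      then show ?thesis using G tk1 by (simp add: R_sh)
    qed
  qed simp
qed

lemma keyB:
  assumes B: "\<forall>u\<in>K1 x m n. u $ m = 0" and G: "\<forall>w\<in>K1' x m n. R x w m (Suc n) = 0"
  shows "K1 x m n \<subseteq> {0\<^sub>v (Suc m)}"
proof
  fix u assume u: "u \<in> K1 x m n"
  have main: "\<And>i u. m - i = k \<Longrightarrow> i \<le> m \<Longrightarrow> u \<in> K1 x m n \<Longrightarrow> u $ i \<noteq> 0 \<Longrightarrow> False" for k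
  proof (induction k arbitrary: i u)
    case 0 then have "i = m" by simp
    then show ?case using 0 B by auto
  next
    case (Suc k)
    then have im: "i < m" by simp
    have "sh m (tk m u) \<in> K1 x m n" using sh_tk_K1[OF B G Suc.prems(3)] .
    moreover have "sh m (tk m u) $ Suc i = u $ i" using im by (simp add: sh_def tk_def)
    moreover have "m - Suc i = k" using Suc.prems(1) by linarith
    ultimately show ?case using Suc.IH[of "Suc i" "sh m (tk m u)"] Suc.prems im by auto
  qed
  have uc: "u \<in> carrier_vec (Suc m)" using u by (simp add: K1_def)
  show "u \<in> {0\<^sub>v (Suc m)}"
  proof (rule ccontr)
    assume "u \<notin> {0\<^sub>v (Suc m)}"
    then have "u \<noteq> 0\<^sub>v (Suc m)" by simp
    then obtain i where "i < Suc m" "u $ i \<noteq> 0" using uc by (metis eq_vecI carrier_vecD index_zero_vec)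
    then show False using main[of i "m - i" u] u by simp
  qed
qed




lemma K1_carrier: "v \<in> K1 x m n \<Longrightarrow> v \<in> carrier_vec (Suc m)" by (simp add: K1_def)
lemma K1'_carrier: "v \<in> K1' x m n \<Longrightarrow> v \<in> carrier_vec m" by (simp add: K1'_def)

lemma caseA:
  fixes x :: "'a::{finite,field} vec"
  assumes mn: "m \<le> Suc n" and u: "u \<in> K1 x m n" and um: "u $ m \<noteq> 0"
  shows "card (K1 x m n) = card (UNIV :: 'a set) * card (K2 x m n)"
proof -
  define u1 where "u1 = inverse (u $ m) \<cdot>\<^sub>v u"
  have uc: "u \<in> carrier_vec (Suc m)" using u by (simp add: K1_def)
  have u1c: "u1 \<in> carrier_vec (Suc m)" using uc by (simp add: u1_def)
  have u1m: "u1 $ m = 1" using uc um by (simp add: u1_def)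
  have u1K: "u1 \<in> K1 x m n" using u uc unfolding u1_def K1_def by (simp add: R_smult)
  have K2eq: "K2 x m n = K1' x m n"
  proof
    show "K2 x m n \<subseteq> K1' x m n" by (auto simp: K2_def K1'_def)
    show "K1' x m n \<subseteq> K2 x m n"
    proof
      fix w assume w: "w \<in> K1' x m n"
      have "R x w m (Suc n) = 0" by (rule keyA[OF mn u1K u1m w])
      then show "w \<in> K2 x m n" using w by (auto simp: K2_def K1'_def less_Suc_eq)
    qed
  qed
  define f where "f = (\<lambda>v. (tk m (v + (- (v $ m)) \<cdot>\<^sub>v u1), v $ m))"
  define g where "g = (\<lambda>(w, c). ex m w + c \<cdot>\<^sub>v u1)"
  have bij: "bij_betw f (K1 x m n) (K1' x m n \<times> (UNIV :: 'a set))"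
  proof (rule bij_betw_byWitness[where f' = g])
    show "\<forall>a\<in>K1 x m n. g (f a) = a"
    proof
      fix v assume v: "v \<in> K1 x m n"
      have vc: "v \<in> carrier_vec (Suc m)" using v by (simp add: K1_def)
      show "g (f v) = v"
        unfolding f_def g_def using vc u1c u1m
        by (intro eq_vecI) (auto simp: ex_def tk_def less_Suc_eq)
    qed
    show "\<forall>a'\<in>K1' x m n \<times> UNIV. f (g a') = a'"
    proof
      fix a' assume a': "a' \<in> K1' x m n \<times> (UNIV :: 'a set)"
      obtain w c where a: "a' = (w, c)" by (cases a')
      have wc: "w \<in> carrier_vec m" using a' a by (simp add: K1'_def)
      have gm: "(ex m w + c \<cdot>\<^sub>v u1) $ m = c" using u1c u1m by (simp add: ex_def)
      show "f (g a') = a'"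
        unfolding a f_def g_def using wc u1c gm
        by (auto intro!: eq_vecI simp: ex_def tk_def)
    qed
    show "f ` K1 x m n \<subseteq> K1' x m n \<times> UNIV"
    proof
      fix y assume "y \<in> f ` K1 x m n"
      then obtain v where v: "v \<in> K1 x m n" and y: "y = f v" by auto
      have vc: "v \<in> carrier_vec (Suc m)" using v by (simp add: K1_def)
      define v' where "v' = v + (- (v $ m)) \<cdot>\<^sub>v u1"
      have v'c: "v' \<in> carrier_vec (Suc m)" using vc u1c by (simp add: v'_def)
      have v'm: "v' $ m = 0" using vc u1c u1m by (simp add: v'_def)
      have "R x (tk m v') m j = 0" if "j < Suc n" for j
      proof -
        have "R x (tk m v') m j = R x v' (Suc m) j" using R_tk[of x v' m j] v'm by simp
        also have "\<dots> = R x v (Suc m) j + (- (v $ m)) * R x u1 (Suc m) j"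
          unfolding v'_def using vc u1c by (simp add: R_add R_smult)
        also have "\<dots> = 0" using v u1K that by (simp add: K1_def)
        finally show ?thesis .
      qed
      then show "y \<in> K1' x m n \<times> UNIV" unfolding y f_def K1'_def v'_def[symmetric] by simp
    qed
    show "g ` (K1' x m n \<times> UNIV) \<subseteq> K1 x m n"
    proof
      fix y assume "y \<in> g ` (K1' x m n \<times> UNIV)"
      then obtain w c where w: "w \<in> K1' x m n" and y: "y = ex m w + c \<cdot>\<^sub>v u1"
        unfolding g_def by auto
      have "R x y (Suc m) j = 0" if "j < Suc n" for j
        unfolding y using u1c w u1K that by (simp add: R_add R_smult R_ex K1_def K1'_def)
      then show "y \<in> K1 x m n" unfolding K1_def using u1c y by simp
    qed
  qed
  have "card (K1 x m n) = card (K1' x m n \<times> (UNIV :: 'a set))" using bij_betw_same_card[OF bij] .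
  also have "\<dots> = card (K1' x m n) * card (UNIV :: 'a set)" by (simp add: card_cartesian_product)
  finally show ?thesis using K2eq by simp
qed


lemma caseB:
  fixes x :: "'a::{finite,field} vec"
  assumes B: "\<forall>u\<in>K1 x m n. u $ m = 0" and ne: "K1 x m n \<noteq> {0\<^sub>v (Suc m)}"
  shows "card (K1 x m n) = card (UNIV :: 'a set) * card (K2 x m n)"
proof -
  obtain w0 where w0: "w0 \<in> K1' x m n" and w0n: "R x w0 m (Suc n) \<noteq> 0"
  proof -
    have "\<not> (\<forall>w\<in>K1' x m n. R x w m (Suc n) = 0)"
    proof
      assume G: "\<forall>w\<in>K1' x m n. R x w m (Suc n) = 0"
      have "K1 x m n \<subseteq> {0\<^sub>v (Suc m)}" by (rule keyB[OF B G])
      moreover have "0\<^sub>v (Suc m) \<in> K1 x m n" by (simp add: K1_def R_def)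
      ultimately show False using ne by blast
    qed
    then show ?thesis using that by blast
  qed
  define w1 where "w1 = inverse (R x w0 m (Suc n)) \<cdot>\<^sub>v w0"
  have w0c: "w0 \<in> carrier_vec m" using w0 by (simp add: K1'_def)
  have w1c: "w1 \<in> carrier_vec m" using w0c by (simp add: w1_def)
  have w1R: "R x w1 m (Suc n) = 1" using w0c w0n by (simp add: w1_def R_smult)
  have w1K: "w1 \<in> K1' x m n" using w0 w0c unfolding w1_def K1'_def by (simp add: R_smult)
  have bij1: "bij_betw (tk m) (K1 x m n) (K1' x m n)"
  proof (rule bij_betw_byWitness[where f' = "ex m"])
    show "\<forall>a\<in>K1 x m n. ex m (tk m a) = a" using B by (auto simp: ex_tk K1_def)
    show "\<forall>a'\<in>K1' x m n. tk m (ex m a') = a'" by (auto simp: K1'_def)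
    show "tk m ` K1 x m n \<subseteq> K1' x m n"
    proof
      fix y assume "y \<in> tk m ` K1 x m n"
      then obtain u where u: "u \<in> K1 x m n" and y: "y = tk m u" by auto
      have "u $ m = 0" using B u by auto
      then have "R x y m j = R x u (Suc m) j" for j using R_tk[of x u m j] y by simp
      then show "y \<in> K1' x m n" using u y by (simp add: K1_def K1'_def)
    qed
    show "ex m ` K1' x m n \<subseteq> K1 x m n" by (auto simp: K1_def K1'_def R_ex)
  qed
  define f where "f = (\<lambda>v. (v + (- R x v m (Suc n)) \<cdot>\<^sub>v w1, R x v m (Suc n)))"
  define g where "g = (\<lambda>(w, c). w + c \<cdot>\<^sub>v w1)"
  have bij2: "bij_betw f (K1' x m n) (K2 x m n \<times> (UNIV :: 'a set))"
  proof (rule bij_betw_byWitness[where f' = g])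
    show "\<forall>a\<in>K1' x m n. g (f a) = a"
    proof
      fix v assume v: "v \<in> K1' x m n"
      have vc: "v \<in> carrier_vec m" using v by (simp add: K1'_def)
      show "g (f v) = v"
        unfolding f_def g_def using vc w1c
        by (intro eq_vecI) auto
    qed
    show "\<forall>a'\<in>K2 x m n \<times> UNIV. f (g a') = a'"
    proof
      fix a' assume a': "a' \<in> K2 x m n \<times> (UNIV :: 'a set)"
      obtain w c where a: "a' = (w, c)" by (cases a')
      have wc: "w \<in> carrier_vec m" using a' a by (simp add: K2_def)
      have wR: "R x w m (Suc n) = 0" using a' a by (simp add: K2_def)
      have gR: "R x (w + c \<cdot>\<^sub>v w1) m (Suc n) = c" using wc w1c wR w1R by (simp add: R_add R_smult)
      show "f (g a') = a'"
        unfolding a f_def g_def using wc w1c gR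
        by (auto intro!: eq_vecI)
    qed
    show "f ` K1' x m n \<subseteq> K2 x m n \<times> UNIV"
    proof
      fix y assume "y \<in> f ` K1' x m n"
      then obtain v where v: "v \<in> K1' x m n" and y: "y = f v" by auto
      have vc: "v \<in> carrier_vec m" using v by (simp add: K1'_def)
      define v' where "v' = v + (- R x v m (Suc n)) \<cdot>\<^sub>v w1"
      have v'c: "v' \<in> carrier_vec m" using vc w1c by (simp add: v'_def)
      have "R x v' m j = 0" if "j < Suc (Suc n)" for j
      proof -
        have "R x v' m j = R x v m j + (- R x v m (Suc n)) * R x w1 m j"
          unfolding v'_def using vc w1c by (simp add: R_add R_smult)
        also have "\<dots> = 0"
        proof (cases "j = Suc n")
          case True then show ?thesis using w1R by simp
        next
          case False then have "j < Suc n" using that by simp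
          then show ?thesis using v w1K by (simp add: K1'_def)
        qed
        finally show ?thesis .
      qed
      then show "y \<in> K2 x m n \<times> UNIV" unfolding y f_def K2_def v'_def[symmetric] using v'c by simp
    qed
    show "g ` (K2 x m n \<times> UNIV) \<subseteq> K1' x m n"
    proof
      fix y assume "y \<in> g ` (K2 x m n \<times> UNIV)"
      then obtain w c where w: "w \<in> K2 x m n" and y: "y = w + c \<cdot>\<^sub>v w1"
        unfolding g_def by auto
      have wc: "w \<in> carrier_vec m" using w by (simp add: K2_def)
      have "R x y m j = 0" if "j < Suc n" for j
        unfolding y using wc w1c w w1K that by (simp add: R_add R_smult K2_def K1'_def)
      then show "y \<in> K1' x m n" unfolding K1'_def using w1c wc y by simp
    qed
  qed
  have "card (K1 x m n) = card (K1' x m n)" using bij_betw_same_card[OF bij1] .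
  also have "\<dots> = card (K2 x m n \<times> (UNIV :: 'a set))" using bij_betw_same_card[OF bij2] .
  also have "\<dots> = card (K2 x m n) * card (UNIV :: 'a set)" by (simp add: card_cartesian_product)
  finally show ?thesis by simp
qed

lemma card_K:
  fixes x :: "'a::{finite,field} vec"
  assumes mn: "m \<le> Suc n" and ne: "K1 x m n \<noteq> {0\<^sub>v (Suc m)}"
  shows "card (K1 x m n) = card (UNIV :: 'a set) * card (K2 x m n)"
proof (cases "\<forall>u\<in>K1 x m n. u $ m = 0")
  case True then show ?thesis using caseB ne by blast
next
  case False then show ?thesis using caseA[OF mn] by blast
qed

lemma K2_zero:
  assumes "K1 x m n = {0\<^sub>v (Suc m)}"
  shows "K2 x m n = {0\<^sub>v m}"
proof
  show "K2 x m n \<subseteq> {0\<^sub>v m}"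
  proof
    fix w assume w: "w \<in> K2 x m n"
    have wc: "w \<in> carrier_vec m" using w by (simp add: K2_def)
    have "ex m w \<in> K1 x m n" using w by (simp add: K1_def K2_def R_ex)
    then have "ex m w = 0\<^sub>v (Suc m)" using assms by simp
    then have "tk m (ex m w) = tk m (0\<^sub>v (Suc m))" by simp
    moreover have "tk m (0\<^sub>v (Suc m)) = 0\<^sub>v m" by (auto simp: tk_def)
    ultimately show "w \<in> {0\<^sub>v m}" using wc tk_ex[OF wc] by simp
  qed
  show "{0\<^sub>v m} \<subseteq> K2 x m n" by (simp add: K2_def R_def)
qed




lemma (in vec_space) rank_lt_iff:
  assumes A: "A \<in> carrier_mat n nc"
  shows "rank A < n \<longleftrightarrow> (\<exists>v\<in>carrier_vec n. v \<noteq> 0\<^sub>v n \<and> (\<forall>j<nc. v \<bullet> col A j = 0))"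
proof -
  obtain S where S: "maximal S (\<lambda>T. T \<subseteq> set (cols A) \<and> lin_indpt T)"
    using maximal_exists[of "(\<lambda>T. T \<subseteq> set (cols A) \<and> lin_indpt T)" "card (set (cols A))" "{}"]
    by (meson List.finite_set card_mono empty_iff empty_subsetI finite_lin_indpt2 rev_finite_subset)
  have rk: "rank A = card S" by (rule rank_card_indpt[OF A S])
  have Ssub: "S \<subseteq> set (cols A)" and Sli: "lin_indpt S" using S by (auto simp: maximal_def)
  have colsc: "set (cols A) \<subseteq> carrier_vec n" using A cols_dim by blast
  have Sc: "S \<subseteq> carrier_vec n" using Ssub colsc by blast
  have finS: "finite S" using Ssub by (meson List.finite_set rev_finite_subset)
  have setcols: "set (cols A) = {col A j | j. j < nc}" using A by (auto simp: cols_def)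
  have colspan: "set (cols A) \<subseteq> span S"
  proof
    fix c assume c: "c \<in> set (cols A)"
    show "c \<in> span S"
    proof (cases "c \<in> S")
      case True then show ?thesis using in_own_span[OF Sc] by blast
    next
      case False
      show ?thesis
      proof (rule ccontr)
        assume ns: "c \<notin> span S"
        have cc: "c \<in> carrier_vec n" using c colsc by blast
        have "lin_indpt (S \<union> {c})" using lin_dep_iff_in_span[OF Sc Sli _ False] cc ns by simp
        moreover have "S \<union> {c} \<subseteq> set (cols A)" using Ssub c by blast
        ultimately have "S \<union> {c} = S" using S unfolding maximal_def by blast
        then show False using False by blast
      qed
    qed
  qed
  show ?thesis
  proof
    assume lt: "rank A < n"
    obtain ss where ss: "set ss = S" "distinct ss" using finite_distinct_list[OF finS] by blast
    have len: "length ss < n" using ss rk lt distinct_card by fastforce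
    define c where "c = (\<lambda>i. if i < length ss then ss ! i else 0\<^sub>v n)"
    define M where "M = mat\<^sub>r n n (\<lambda>i. if i = n - 1 then 0\<^sub>v n else c i)"
    have cc: "c \<in> {0..<n} \<rightarrow> carrier_vec n"
    proof
      fix i assume "i \<in> {0..<n}"
      show "c i \<in> carrier_vec n"
      proof (cases "i < length ss")
        case True
        then have "ss ! i \<in> S" using ss(1) nth_mem by blast
        then show ?thesis using True Sc unfolding c_def by auto
      qed (simp add: c_def)
    qed
    have "det M = 0" unfolding M_def by (rule det_row_0) (use len cc in auto)
    moreover have Mc: "M \<in> carrier_mat n n" unfolding M_def by simp
    ultimately obtain v where v: "v \<in> carrier_vec n" "v \<noteq> 0\<^sub>v n" "M *\<^sub>v v = 0\<^sub>v n"
      using det_0_iff_vec_prod_zero_field[OF Mc] by blast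
    have vS: "\<forall>s\<in>S. v \<bullet> s = 0"
    proof
      fix s assume s: "s \<in> S"
      then obtain i where i: "i < length ss" "ss ! i = s" using ss by (metis in_set_conv_nth)
      have sc: "s \<in> carrier_vec n" using s Sc by blast
      have "i < n" "i \<noteq> n - 1" using i len by auto
      then have "(M *\<^sub>v v) $ i = s \<bullet> v" unfolding M_def c_def using i sc by simp
      then have "s \<bullet> v = 0" using v \<open>i < n\<close> by simp
      then show "v \<bullet> s = 0" using comm_scalar_prod[OF sc v(1)] by simp
    qed
    have "v \<in> orthogonal_complement S" using vS v by (simp add: orthogonal_complement_def)
    then have "v \<in> orthogonal_complement (span S)" using in_orthogonal_complement_span[OF Sc] by simp
    then have "\<forall>j<nc. v \<bullet> col A j = 0" using colspan setcols
      unfolding orthogonal_complement_def by blast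
    then show "\<exists>v\<in>carrier_vec n. v \<noteq> 0\<^sub>v n \<and> (\<forall>j<nc. v \<bullet> col A j = 0)" using v by blast
  next
    assume "\<exists>v\<in>carrier_vec n. v \<noteq> 0\<^sub>v n \<and> (\<forall>j<nc. v \<bullet> col A j = 0)"
    then obtain v where v: "v \<in> carrier_vec n" "v \<noteq> 0\<^sub>v n" "\<forall>j<nc. v \<bullet> col A j = 0" by blast
    show "rank A < n"
    proof (rule ccontr)
      assume "\<not> rank A < n"
      then have "card S \<ge> dim" using rk dim_is_n by simp
      then have "basis S" using dim_li_is_basis[OF fin_dim finS _ Sli] Sc by blast
      then have spS: "span S = carrier_vec n" unfolding basis_def by simp
      have "\<forall>s\<in>S. v \<bullet> s = 0"
      proof
        fix s assume "s \<in> S"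
        then have "s \<in> {col A j | j. j < nc}" using Ssub setcols by blast
        then obtain j where "j < nc" "s = col A j" by blast
        then show "v \<bullet> s = 0" using v(3) by simp
      qed
      then have "v \<in> orthogonal_complement S" using v(1)
        unfolding orthogonal_complement_def by blast
      then have "v \<in> orthogonal_complement (span S)" using in_orthogonal_complement_span[OF Sc] by simp
      then have h: "\<forall>y\<in>carrier_vec n. v \<bullet> y = 0" unfolding spS orthogonal_complement_def by auto
      have "\<forall>i<n. v $ i = 0"
      proof (intro allI impI)
        fix i assume i: "i < n"
        have "v \<bullet> unit_vec n i = 0" using h unit_vec_carrier by blast
        then show "v $ i = 0" using scalar_prod_right_unit[OF i, of v] by simp
      qed
      then have "v = 0\<^sub>v n" using v(1) by (intro eq_vecI) auto
      then show False using v(2) by simp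
    qed
  qed
qed




lemma sum_ind: "finite A \<Longrightarrow> (\<Sum>v\<in>A. if P v then 1 else 0 :: int) = int (card {v\<in>A. P v})"
  by (simp add: sum.If_cases Int_def conj_commute)

lemma col_hk: "j < c \<Longrightarrow> v \<in> carrier_vec r \<Longrightarrow> v \<bullet> col (hankel_mat r c x) j = R x v r j"
  unfolding hankel_mat_def R_def scalar_prod_def by (simp add: atLeast0LessThan)

theorem proposition12:
  fixes x :: "'a::{finite,field} vec" and m n :: nat
  assumes "m \<le> n + 1"
    and "x \<in> carrier_vec (m + n + 1)"
  shows "(int (card (UNIV :: 'a set)) - 1) *
           (if vec_space.rank (m + 1) (hankel_mat (m + 1) (n + 1) x) \<le> m then 1 else 0)
         = (\<Sum>v\<in>carrier_vec (m + 1) - {0\<^sub>v (m + 1)}.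
              if mat_of_row v * hankel_mat (m + 1) (n + 1) x = 0\<^sub>m 1 (n + 1) then 1 else 0)
           - int (card (UNIV :: 'a set)) *
             (\<Sum>v\<in>carrier_vec m - {0\<^sub>v m}.
              if mat_of_row v * hankel_mat m (n + 2) x = 0\<^sub>m 1 (n + 2) then 1 else 0)"
proof -
  have mn: "m \<le> Suc n" using assms(1) by simp
  have fin1: "finite (K1 x m n)" using fin_cv[of "Suc m"] by (rule rev_finite_subset) (auto simp: K1_def)
  have fin2: "finite (K2 x m n)" using fin_cv[of m] by (rule rev_finite_subset) (auto simp: K2_def)
  have z1: "0\<^sub>v (Suc m) \<in> K1 x m n" by (simp add: K1_def R_def)
  have z2: "0\<^sub>v m \<in> K2 x m n" by (simp add: K2_def R_def)
  have s1: "(\<Sum>v\<in>carrier_vec (m + 1) - {0\<^sub>v (m + 1)}.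
              if mat_of_row v * hankel_mat (m + 1) (n + 1) x = 0\<^sub>m 1 (n + 1) then 1 else 0)
           = int (card (K1 x m n)) - 1"
  proof -
    have Seq: "{v \<in> carrier_vec (m + 1) - {0\<^sub>v (m + 1)}. mat_of_row v * hankel_mat (m + 1) (n + 1) x = 0\<^sub>m 1 (n + 1)}
        = K1 x m n - {0\<^sub>v (Suc m)}"
    proof -
      have e: "\<And>v. v \<in> carrier_vec (m+1) \<Longrightarrow> (mat_of_row v * hankel_mat (m + 1) (n + 1) x = 0\<^sub>m 1 (n + 1)) \<longleftrightarrow> (\<forall>j<Suc n. R x v (Suc m) j = 0)"
        using hankel_zero_iff by (metis Suc_eq_plus1)
      show ?thesis using e by (auto simp: K1_def)
    qed
    have "card (K1 x m n - {0\<^sub>v (Suc m)}) = card (K1 x m n) - 1"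
      using fin1 z1 by simp
    moreover have "card (K1 x m n) \<ge> 1" using fin1 z1 by (metis One_nat_def Suc_leI card_gt_0_iff empty_iff)
    ultimately have C: "int (card (K1 x m n - {0\<^sub>v (Suc m)})) = int (card (K1 x m n)) - 1" by (simp add: of_nat_diff)
    have fc: "finite (carrier_vec (m + 1) - {0\<^sub>v (m + 1)} :: 'a vec set)" using fin_cv by blast
    show ?thesis
      by (subst sum_ind[OF fc], subst Seq, rule C)
  qed
  have s2: "(\<Sum>v\<in>carrier_vec m - {0\<^sub>v m}.
              if mat_of_row v * hankel_mat m (n + 2) x = 0\<^sub>m 1 (n + 2) then 1 else 0)
           = int (card (K2 x m n)) - 1"
  proof -
    have Seq: "{v \<in> carrier_vec m - {0\<^sub>v m}. mat_of_row v * hankel_mat m (n + 2) x = 0\<^sub>m 1 (n + 2)}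
        = K2 x m n - {0\<^sub>v m}"
    proof -
      have e: "\<And>v. v \<in> carrier_vec m \<Longrightarrow> (mat_of_row v * hankel_mat m (n + 2) x = 0\<^sub>m 1 (n + 2)) \<longleftrightarrow> (\<forall>j<Suc (Suc n). R x v m j = 0)"
        using hankel_zero_iff by (metis add_2_eq_Suc')
      show ?thesis using e by (auto simp: K2_def)
    qed
    have "card (K2 x m n - {0\<^sub>v m}) = card (K2 x m n) - 1"
      using fin2 z2 by simp
    moreover have "card (K2 x m n) \<ge> 1" using fin2 z2 by (metis One_nat_def Suc_leI card_gt_0_iff empty_iff)
    ultimately have C: "int (card (K2 x m n - {0\<^sub>v m})) = int (card (K2 x m n)) - 1" by (simp add: of_nat_diff)
    have fc: "finite (carrier_vec m - {0\<^sub>v m} :: 'a vec set)" using fin_cv by blast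
    show ?thesis
      by (subst sum_ind[OF fc], subst Seq, rule C)
  qed
  have rk: "vec_space.rank (m + 1) (hankel_mat (m + 1) (n + 1) x) \<le> m \<longleftrightarrow> K1 x m n \<noteq> {0\<^sub>v (Suc m)}"
  proof -
    have Hc: "hankel_mat (m + 1) (n + 1) x \<in> carrier_mat (m + 1) (n + 1)" by (simp add: hankel_mat_def)
    have "vec_space.rank (m + 1) (hankel_mat (m + 1) (n + 1) x) \<le> m
        \<longleftrightarrow> vec_space.rank (m + 1) (hankel_mat (m + 1) (n + 1) x) < m + 1" by linarith
    also have "\<dots> \<longleftrightarrow> (\<exists>v\<in>carrier_vec (m + 1). v \<noteq> 0\<^sub>v (m + 1) \<and>
        (\<forall>j<n + 1. v \<bullet> col (hankel_mat (m + 1) (n + 1) x) j = 0))"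
      by (rule vec_space.rank_lt_iff[OF Hc])
    also have "\<dots> \<longleftrightarrow> (\<exists>v\<in>K1 x m n. v \<noteq> 0\<^sub>v (Suc m))"
      by (auto simp: K1_def col_hk)
    also have "\<dots> \<longleftrightarrow> K1 x m n \<noteq> {0\<^sub>v (Suc m)}" using z1 by blast
    finally show ?thesis .
  qed
  show ?thesis
  proof (cases "K1 x m n = {0\<^sub>v (Suc m)}")
    case True
    then have "K2 x m n = {0\<^sub>v m}" by (rule K2_zero)
    then show ?thesis unfolding s1 s2 using True rk by simp
  next
    case False
    then have "card (K1 x m n) = card (UNIV :: 'a set) * card (K2 x m n)" by (rule card_K[OF mn])
    then show ?thesis unfolding s1 s2 using False rk by (simp add: algebra_simps)
  qed
qed


end
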